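(* Let $\underline{L}$ be a finite lattice and $\underline{S}=[u,v]$ an interval of $\underline{L}$. If $\underline{S}$ is dismantling for $\underline{L}$, then $\underline{L}\setminus\underline{S}$ is a complete sublattice of $\underline{L}$ (i.e. $L\setminus S$ is closed under arbitrary joins and meets taken in $\underline{L}$, including the empty ones, so it contains the top and bottom of $\underline{L}$).
   Context: For $u\le v$ in a lattice $L$, $[u,v]=\{x\mid u\le x\le v\}$, $(v]=\{x\mid x\le v\}$, $[u)=\{x\mid u\le x\}$. An interval $[u,v]$ of $L$ is quasi-dismantling for $L$ if $u$ is supremum-prime in $(v]$ (for all $x,y\in(v]$, $u\le x\vee y$ implies $u\le x$ or $u\le y$) and $v$ is infimum-prime in $[u)$ (for all $x,y\in[u)$, $x\wedge y\le v$ implies $x\le v$ or $y\le v$). It is dismantling for $L$ if moreover $u\neq\bot$ and $v\neq\top$, where $\bot,\top$ are the least and greatest elements of $L$. *)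

theory Defs
  imports Main "HOL-Library.Finite_Lattice"
begin

definition interval :: "'a::order \<Rightarrow> 'a \<Rightarrow> 'a set" where
  "interval u v = {x. u \<le> x \<and> x \<le> v}"

definition sup_prime_in_downset :: "'a::lattice \<Rightarrow> 'a \<Rightarrow> bool" where
  "sup_prime_in_downset u v \<longleftrightarrow>
     (\<forall>x y. x \<le> v \<longrightarrow> y \<le> v \<longrightarrow> u \<le> sup x y \<longrightarrow> u \<le> x \<or> u \<le> y)"

definition inf_prime_in_upset :: "'a::lattice \<Rightarrow> 'a \<Rightarrow> bool" where
  "inf_prime_in_upset v u \<longleftrightarrow>
     (\<forall>x y. u \<le> x \<longrightarrow> u \<le> y \<longrightarrow> inf x y \<le> v \<longrightarrow> x \<le> v \<or> y \<le> v)"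

definition quasi_dismantling :: "'a::lattice \<Rightarrow> 'a \<Rightarrow> bool" where
  "quasi_dismantling u v \<longleftrightarrow> u \<le> v \<and> sup_prime_in_downset u v \<and> inf_prime_in_upset v u"

definition dismantling :: "'a::bounded_lattice \<Rightarrow> 'a \<Rightarrow> bool" where
  "dismantling u v \<longleftrightarrow> quasi_dismantling u v \<and> u \<noteq> bot \<and> v \<noteq> top"

end

theory Submission
  imports Defs
begin

lemma sup_prime_finite:
  fixes u v :: "'a::finite_lattice"
  assumes sp: "sup_prime_in_downset u v" and ub: "u \<noteq> bot"
  shows "finite B \<Longrightarrow> (\<forall>b\<in>B. b \<le> v) \<Longrightarrow> u \<le> Sup B \<Longrightarrow> \<exists>b\<in>B. u \<le> b"
proof (induction B rule: finite_induct)
  case empty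
  then show ?case using ub by (simp add: bot_unique)
next
  case (insert x F)
  have "Sup F \<le> v" using insert.prems by (simp add: Sup_least)
  moreover have "x \<le> v" using insert.prems by simp
  moreover have "u \<le> sup x (Sup F)" using insert.prems by simp
  ultimately have "u \<le> x \<or> u \<le> Sup F" using sp unfolding sup_prime_in_downset_def by blast
  then show ?case using insert by auto
qed

lemma inf_prime_finite:
  fixes u v :: "'a::finite_lattice"
  assumes ip: "inf_prime_in_upset v u" and vt: "v \<noteq> top"
  shows "finite B \<Longrightarrow> (\<forall>b\<in>B. u \<le> b) \<Longrightarrow> Inf B \<le> v \<Longrightarrow> \<exists>b\<in>B. b \<le> v"
proof (induction B rule: finite_induct)
  case empty
  then show ?case using vt by (simp add: top_unique)
next
  case (insert x F)
  have "u \<le> Inf F" using insert.prems by (simp add: Inf_greatest)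
  moreover have "u \<le> x" using insert.prems by simp
  moreover have "inf x (Inf F) \<le> v" using insert.prems by simp
  ultimately have "x \<le> v \<or> Inf F \<le> v" using ip unfolding inf_prime_in_upset_def by blast
  then show ?case using insert by auto
qed

theorem corollary1:
  fixes u v :: "'a::finite_lattice"
  assumes "u \<le> v"
    and "dismantling u v"
  shows "\<forall>A. A \<subseteq> - interval u v \<longrightarrow>
           Sup A \<in> - interval u v \<and> Inf A \<in> - interval u v"
proof (intro allI impI conjI)
  fix A :: "'a set"
  assume A: "A \<subseteq> - interval u v"
  have fin: "finite A" by simp
  have sp: "sup_prime_in_downset u v" and ip: "inf_prime_in_upset v u"
    and ub: "u \<noteq> bot" and vt: "v \<noteq> top"
    using assms(2) unfolding dismantling_def quasi_dismantling_def by auto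
  show "Sup A \<in> - interval u v"
  proof
    assume S: "Sup A \<in> interval u v"
    then have "\<forall>b\<in>A. b \<le> v" "u \<le> Sup A"
      unfolding interval_def by (auto intro: order_trans Sup_upper)
    then obtain b where "b \<in> A" "u \<le> b"
      using sup_prime_finite[OF sp ub fin] by blast
    moreover have "b \<le> v" using \<open>\<forall>b\<in>A. b \<le> v\<close> \<open>b \<in> A\<close> by blast
    ultimately show False using A unfolding interval_def by auto
  qed
  show "Inf A \<in> - interval u v"
  proof
    assume S: "Inf A \<in> interval u v"
    then have "\<forall>b\<in>A. u \<le> b" "Inf A \<le> v"
      unfolding interval_def by (auto intro: order_trans Inf_lower)
    then obtain b where "b \<in> A" "b \<le> v"
      using inf_prime_finite[OF ip vt fin] by blast
    moreover have "u \<le> b" using \<open>\<forall>b\<in>A. u \<le> b\<close> \<open>b \<in> A\<close> by blast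
    ultimately show False using A unfolding interval_def by auto
  qed
qed

end
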